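(* Let $G$ be an $n$-isobicyclic group with canonical generators $x,y$, and let $P$ be an abelian normal Sylow $p$-subgroup of $G$, so $P=\langle x_p\rangle\times\langle y_p\rangle\cong C_{p^d}\times C_{p^d}$. Then $G$ acts diagonally on $P$ with respect to the basis $x_p,y_p$: there exists $\lambda\in\mathbb Z_{p^d}^*$ such that conjugation by $x$ fixes $x_p$ and sends $y_p\mapsto y_p^\lambda$, and conjugation by $y$ sends $x_p\mapsto x_p^\lambda$ and fixes $y_p$.
   Context: $G$ is $n$-isobicyclic with canonical generators $x,y$ if $X=\langle x\rangle$, $Y=\langle y\rangle$ are cyclic of order $n$, $G=XY$, $X\cap Y=1$, and some automorphism of $G$ transposes $x,y$. For a prime $p$, $x=x_px_{p'}$ and $y=y_py_{p'}$ are the factorisations into commuting elements of $p$-power and $p'$-order; $\langle x_p\rangle\langle y_p\rangle$ is a Sylow $p$-subgroup of $G$, equal to $P$ when $P$ is normal. *)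

theory Defs
  imports "HOL-Algebra.Algebra" "HOL-Algebra.Multiplicative_Group"
begin

definition isobicyclic :: "('a, 'b) monoid_scheme \<Rightarrow> nat \<Rightarrow> 'a \<Rightarrow> 'a \<Rightarrow> bool" where
  "isobicyclic G n x y \<longleftrightarrow>
     group G \<and> finite (carrier G) \<and> x \<in> carrier G \<and> y \<in> carrier G \<and>
     group.ord G x = n \<and> group.ord G y = n \<and>
     carrier G = generate G {x} <#>\<^bsub>G\<^esub> generate G {y} \<and>
     generate G {x} \<inter> generate G {y} = {\<one>\<^bsub>G\<^esub>} \<and>
     (\<exists>\<phi> \<in> iso G G. \<phi> x = y \<and> \<phi> y = x)"

definition p_part :: "('a, 'b) monoid_scheme \<Rightarrow> nat \<Rightarrow> 'a \<Rightarrow> 'a" where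
  "p_part G p g = (THE h. h \<in> carrier G \<and> h \<otimes>\<^bsub>G\<^esub> g = g \<otimes>\<^bsub>G\<^esub> h \<and>
       (\<exists>k. group.ord G h = p ^ k) \<and>
       coprime (group.ord G (g \<otimes>\<^bsub>G\<^esub> inv\<^bsub>G\<^esub> h)) p)"

definition sylow_subgroup :: "('a, 'b) monoid_scheme \<Rightarrow> nat \<Rightarrow> 'a set \<Rightarrow> bool" where
  "sylow_subgroup G p P \<longleftrightarrow> subgroup P G \<and> card P = p ^ multiplicity p (order G)"

end

theory Submission
  imports Defs
begin

lemma geo_id: "((s::int) - 1) * (\<Sum>t<k. s ^ t) = s ^ k - 1"
  by (induction k) (auto simp: algebra_simps)

lemma geo_mod: "(pp::int) dvd s - 1 \<Longrightarrow> pp dvd (\<Sum>t<k. s ^ t) - int k"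
proof (induction k)
  case (Suc k)
  have "pp dvd (s - 1) * (\<Sum>t<k. s ^ t)" using Suc.prems by simp
  hence "pp dvd s ^ k - 1" using geo_id[of s k] by simp
  hence "pp dvd ((\<Sum>t<k. s ^ t) - int k) + (s ^ k - 1)" using Suc by simp
  thus ?case by (simp add: algebra_simps)
qed simp

lemma copr_pow: "Factorial_Ring.prime (pp::int) \<Longrightarrow> \<not> pp dvd z \<Longrightarrow> coprime (pp ^ d) z"
  using prime_imp_coprime by auto

lemma nt_main:
  fixes r s :: int and pp :: int and d q j :: nat
  assumes pr: "Factorial_Ring.prime pp" and d1: "d \<ge> 1" and cq: "\<not> pp dvd int q"
    and A1: "pp ^ d dvd s ^ q - 1" and A2: "pp ^ d dvd r * (\<Sum>t<q. s ^ t)"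
    and B1: "pp ^ d dvd s + r * r - s ^ j" and B2: "pp ^ d dvd s * r - r * (\<Sum>t<j. s ^ t)"
    and ns: "\<not> pp dvd s"
  shows "pp ^ d dvd r \<or> (\<not> pp dvd s - 1 \<and> (\<exists>e. (e = 1 \<or> e = -1) \<and> pp ^ d dvd r - e * (s - 1)))"
proof (cases "pp dvd s - 1")
  case True
  have pd: "pp dvd pp ^ d" using d1 by (simp add: dvd_power)
  have "pp dvd (\<Sum>t<q. s ^ t) - int q" using geo_mod[OF True] .
  hence "\<not> pp dvd (\<Sum>t<q. s ^ t)"
  proof (intro notI)
    assume h1: "pp dvd (\<Sum>t<q. s ^ t) - int q" and h2: "pp dvd (\<Sum>t<q. s ^ t)"
    have "pp dvd (\<Sum>t<q. s ^ t) - ((\<Sum>t<q. s ^ t) - int q)" using h1 h2 dvd_diff by blast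
    thus False using cq by simp
  qed
  hence "coprime (pp ^ d) (\<Sum>t<q. s ^ t)" using copr_pow pr by blast
  hence "pp ^ d dvd r" using A2 by (simp add: coprime_dvd_mult_left_iff)
  thus ?thesis by simp
next
  case False
  define C where "C = (\<Sum>t<j. s ^ t)"
  have Cid: "(s - 1) * C = s ^ j - 1" unfolding C_def by (rule geo_id)
  have "r * (r - (s - 1)) * (r + (s - 1)) = (s - 1) * (r * C - r * s) + r * (s + r * r - s ^ j)"
  proof -
    have "(s - 1) * (r * C - r * s) = r * ((s - 1) * C) - r * s * (s - 1)" by (simp add: algebra_simps)
    also have "\<dots> = r * (s ^ j - 1) - r * s * (s - 1)" using Cid by simp
    finally show ?thesis by (simp add: algebra_simps)
  qed
  moreover have "pp ^ d dvd (s - 1) * (r * C - r * s)"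
    using B2 unfolding C_def by (metis dvd_minus_iff dvd_mult minus_diff_eq mult.commute)
  moreover have "pp ^ d dvd r * (s + r * r - s ^ j)" using B1 by simp
  ultimately have key: "pp ^ d dvd r * ((r - (s - 1)) * (r + (s - 1)))" by (simp add: mult.assoc)
  have pd: "pp dvd pp ^ d" using d1 by (simp add: dvd_power)
  show ?thesis
  proof (cases "pp dvd r")
    case True
    have "\<not> pp dvd r - (s - 1)"
    proof
      assume "pp dvd r - (s - 1)"
      hence "pp dvd r - (r - (s - 1))" using True dvd_diff by blast
      thus False using False by simp
    qed
    moreover have "\<not> pp dvd r + (s - 1)" using True False by (metis dvd_add_right_iff)
    ultimately have "\<not> pp dvd (r - (s - 1)) * (r + (s - 1))" using pr prime_dvd_mult_iff by blast
    hence "coprime (pp ^ d) ((r - (s - 1)) * (r + (s - 1)))" using copr_pow pr by blast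
    hence "pp ^ d dvd r" using key by (simp add: coprime_dvd_mult_left_iff)
    thus ?thesis by simp
  next
    case nr: False
    have cr: "coprime (pp ^ d) r" using copr_pow pr nr by blast
    hence key2: "pp ^ d dvd (r - (s - 1)) * (r + (s - 1))" using key by (simp add: coprime_dvd_mult_right_iff)
    have not_both: "\<not> (pp dvd r - (s - 1) \<and> pp dvd r + (s - 1))"
    proof
      assume h: "pp dvd r - (s - 1) \<and> pp dvd r + (s - 1)"
      hence "pp dvd (r - (s - 1)) + (r + (s - 1))" using dvd_add by blast
      hence "pp dvd 2 * r" by (simp add: algebra_simps mult_2)
      hence "pp dvd 2" using nr pr prime_dvd_mult_iff by blast
      hence "pp \<le> 2" using zdvd_imp_le by simp
      moreover have "pp \<ge> 2" using pr prime_ge_2_int by blast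
      ultimately have "pp = 2" by simp
      moreover have "even s \<or> even (s - 1)" by auto
      ultimately show False using ns False by auto
    qed
    show ?thesis
    proof (cases "pp dvd r - (s - 1)")
      case True
      hence "\<not> pp dvd r + (s - 1)" using not_both by blast
      hence "coprime (pp ^ d) (r + (s - 1))" using copr_pow pr by blast
      hence "pp ^ d dvd r - 1 * (s - 1)" using key2 by (simp add: coprime_dvd_mult_left_iff)
      thus ?thesis using False by blast
    next
      case f2: False
      hence "coprime (pp ^ d) (r - (s - 1))" using copr_pow pr by blast
      hence "pp ^ d dvd r + (s - 1)" using key2 by (simp add: coprime_dvd_mult_right_iff)
      moreover have "r + (s - 1) = r - (-1) * (s - 1)" by simp
      ultimately have "pp ^ d dvd r - (-1) * (s - 1)" by metis
      thus ?thesis using False by blast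
    qed
  qed
qed

locale iso_setting = group G for G (structure) +
  fixes n p :: nat and x y :: 'a and P :: "'a set"
  assumes fin: "finite (carrier G)" and xc: "x \<in> carrier G" and yc: "y \<in> carrier G"
  and ordx: "ord x = n" and ordy: "ord y = n"
  and carr: "carrier G = generate G {x} <#> generate G {y}"
  and inter: "generate G {x} \<inter> generate G {y} = {\<one>}"
  and theta: "\<exists>\<phi> \<in> iso G G. \<phi> x = y \<and> \<phi> y = x"
  and pr: "Factorial_Ring.prime p"
  and sylP: "subgroup P G" and cardP: "card P = p ^ multiplicity p (order G)"
  and nrm: "P \<lhd> G"
  and ab: "\<forall>a\<in>P. \<forall>b\<in>P. a \<otimes> b = b \<otimes> a"
begin

definition "q = card (rcosets P)"

lemma order_eq: "order G = q * card P"
  using lagrange[OF sylP] q_def by simp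

lemma order_pos: "order G > 0"
  using fin one_closed unfolding order_def by (auto simp: card_gt_0_iff)

lemma q_coprime: "coprime q p"
proof -
  have "card P > 0" using order_eq order_pos by simp
  have "q = order G div p ^ multiplicity p (order G)"
    using order_eq cardP \<open>card P > 0\<close> by (metis nonzero_mult_div_cancel_right not_gr0)
  hence "\<not> p dvd q" using multiplicity_decompose[of "order G" p] order_pos prime_gt_1_nat[OF pr]
    by auto
  thus ?thesis using pr by (simp add: coprime_commute prime_imp_coprime)
qed

lemma pow_q_in_P: assumes "g \<in> carrier G" shows "g [^] q \<in> P"
proof -
  interpret N: normal P G by (rule nrm)
  have gq: "group (G Mod P)" by (rule N.factorgroup_is_group)
  have "P #> g \<in> carrier (G Mod P)" using assms unfolding FactGroup_def RCOSETS_def by auto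
  hence "(P #> g) [^]\<^bsub>G Mod P\<^esub> order (G Mod P) = \<one>\<^bsub>G Mod P\<^esub>"
    by (rule group.pow_order_eq_1[OF gq])
  moreover have "order (G Mod P) = q" unfolding order_def q_def FactGroup_def by simp
  ultimately have "P #> (g [^] q) = P"
    using N.FactGroup_pow[OF assms, of q] by simp
  thus ?thesis using coset_join1 sylP assms by blast
qed

lemma q_pos: "q > 0"
  using order_eq order_pos by (metis gr0I mult_is_0 not_less0)

lemma P_pow_closed: "h \<in> P \<Longrightarrow> h [^] (k::nat) \<in> P"
  by (induction k) (auto simp: subgroup.one_closed[OF sylP] subgroup.m_closed[OF sylP])

lemma P_carr: "h \<in> P \<Longrightarrow> h \<in> carrier G" using subgroup.mem_carrier[OF sylP] .

lemma p_elem_in_P: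
  assumes g: "g \<in> carrier G" and e: "g [^] (p ^ e) = \<one>"
  shows "g \<in> P"
proof -
  have "coprime q (p ^ e)" using q_coprime by simp
  then obtain u t where ut: "q * u = p ^ e * t + 1"
    using bezout_nat[of q "p^e"] q_pos by auto
  have "g [^] (q * u) = g" using g e
    by (simp add: ut nat_pow_mult[symmetric] nat_pow_pow[symmetric])
  moreover have "g [^] (q * u) = (g [^] q) [^] u" using g by (simp add: nat_pow_pow)
  moreover have "(g [^] q) [^] u \<in> P"
    using pow_q_in_P[OF g] by (rule P_pow_closed)
  ultimately show ?thesis by simp
qed

lemma n_pos: "n > 0" using ord_ge_1[OF fin xc] ordx by simp

definition "d = multiplicity p n"
definition "N = p ^ d"
definition "m = n div N"

lemma n_eq: "n = N * m"
  unfolding m_def N_def d_def by (simp add: multiplicity_dvd)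

lemma m_not_dvd: "\<not> p dvd m"
  unfolding m_def N_def d_def using multiplicity_decompose[of n p] n_pos prime_gt_1_nat[OF pr] by auto

lemma m_pos: "m > 0" using n_eq n_pos by (metis gr0I mult_0_right)
lemma N_pos: "N > 0" using n_eq n_pos by (metis gr0I mult_0)

lemma coprime_mp: "coprime m p"
  using m_not_dvd pr by (simp add: coprime_commute prime_imp_coprime)

definition "c = (SOME c. \<exists>u t. c = m * u \<and> c = N * t + 1)"

lemma c_prop: "\<exists>u t. c = m * u \<and> c = N * t + 1"
proof -
  have "coprime m N" using coprime_mp unfolding N_def by simp
  then obtain u t where "m * u = N * t + 1" using bezout_nat[of m N] m_pos by auto
  hence "\<exists>c u t. c = m * u \<and> c = N * t + 1" by blast
  thus ?thesis unfolding c_def by (rule someI_ex)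
qed


lemma pow_c_split: "g \<in> carrier G \<Longrightarrow> \<exists>t. g [^] c = g [^] (N * t) \<otimes> g"
proof -
  assume g: "g \<in> carrier G"
  obtain u t where ut: "c = m * u" "c = N * t + 1" using c_prop by blast
  have "g [^] (N*t) \<otimes> g [^] (1::nat) = g [^] (N*t + 1)" using g by (rule nat_pow_mult)
  hence "g [^] c = g [^] (N*t) \<otimes> g" using g ut(2) by simp
  thus ?thesis by blast
qed

lemma pow_mult_one: "g \<in> carrier G \<Longrightarrow> g [^] (a::nat) = \<one> \<Longrightarrow> g [^] (a * b) = \<one>"
  by (metis nat_pow_one nat_pow_pow)

lemma pow_mult_one': "g \<in> carrier G \<Longrightarrow> g [^] (a::nat) = \<one> \<Longrightarrow> g [^] (b * a) = \<one>"
  by (metis mult.commute pow_mult_one)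

lemma p_part_eq:
  assumes g: "g \<in> carrier G" and og: "ord g = n"
  shows "p_part G p g = g [^] c"
proof -
  obtain u t where ut: "c = m * u" "c = N * t + 1" using c_prop by blast
  have gn: "g [^] n = \<one>" using og g pow_ord_eq_1 by metis
  let ?Q = "\<lambda>h. h \<in> carrier G \<and> h \<otimes> g = g \<otimes> h \<and>
       (\<exists>k. ord h = p ^ k) \<and> coprime (ord (g \<otimes> inv h)) p"
  have Q1: "?Q (g [^] c)"
  proof (intro conjI)
    show "g [^] c \<in> carrier G" using g by simp
    show "g [^] c \<otimes> g = g \<otimes> g [^] c" using g nat_pow_comm[of g c 1] by simp
    have "(g [^] c) [^] N = g [^] (c * N)" using g by (rule nat_pow_pow)
    also have "c * N = n * u" using ut(1) n_eq by (simp add: mult.commute mult.left_commute)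
    also have "g [^] (n * u) = \<one>" using pow_mult_one[OF g gn] .
    finally have "ord (g [^] c) dvd p ^ d" using g N_def pow_eq_id by auto
    thus "\<exists>k. ord (g [^] c) = p ^ k" using divides_primepow_nat[OF pr] by blast
    obtain t' where t': "g [^] c = g [^] (N * t') \<otimes> g" using pow_c_split[OF g] by blast
    have e: "g \<otimes> inv (g [^] c) = inv (g [^] (N*t'))"
      using g by (simp add: t' inv_mult_group m_assoc[symmetric])
    have "(g [^] (N*t')) [^] m = g [^] (N * t' * m)" using g by (rule nat_pow_pow)
    also have "N * t' * m = n * t'" using n_eq by simp
    also have "g [^] (n * t') = \<one>" using pow_mult_one[OF g gn] .
    finally have "ord (g [^] (N*t')) dvd m" using g pow_eq_id by auto
    hence "\<not> p dvd ord (g [^] (N*t'))" using m_not_dvd dvd_trans by blast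
    thus "coprime (ord (g \<otimes> inv (g [^] c))) p" using e g pr
      by (simp add: coprime_commute prime_imp_coprime)
  qed
  have Q2: "h = g [^] c" if Qh: "?Q h" for h
  proof -
    from Qh obtain k where hc: "h \<in> carrier G" and hg: "h \<otimes> g = g \<otimes> h"
      and ok: "ord h = p ^ k" and co: "coprime (ord (g \<otimes> inv h)) p" by blast
    define g' where "g' = g \<otimes> inv h"
    have g'c: "g' \<in> carrier G" using g hc g'_def by simp
    have gg: "g = g' \<otimes> h" using g hc g'_def by (simp add: m_assoc)
    have comm: "g' \<otimes> h = h \<otimes> g'"
    proof -
      have "h \<otimes> g' = h \<otimes> g \<otimes> inv h" using g hc g'_def by (simp add: m_assoc)
      also have "\<dots> = g" using hg g hc by (simp add: m_assoc)
      finally show ?thesis using gg by simp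
    qed
    have dist: "\<And>e. g [^] (e::nat) = g' [^] e \<otimes> h [^] e"
      using gg comm pow_mult_distrib g'c hc by simp
    define w where "w = h [^] n"
    have wc: "w \<in> carrier G" using hc w_def by simp
    have w_eq: "g' [^] n \<otimes> w = \<one>" using dist[of n] gn w_def by simp
    have "w [^] (p ^ k) = h [^] (n * p ^ k)" using hc w_def nat_pow_pow by simp
    also have "\<dots> = \<one>" using pow_mult_one'[OF hc, of "p^k" n] hc ok pow_ord_eq_1 by metis
    finally have d1: "ord w dvd p ^ k" using wc pow_eq_id by auto
    have "w = inv (g' [^] n) \<otimes> (g' [^] n \<otimes> w)" using wc g'c by (simp add: m_assoc[symmetric])
    hence winv: "w = inv (g' [^] n)" using w_eq g'c by simp
    have "w [^] ord g' = inv ((g' [^] n) [^] ord g')" using winv g'c nat_pow_inv by simp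
    also have "(g' [^] n) [^] ord g' = g' [^] (n * ord g')" using g'c nat_pow_pow by simp
    also have "\<dots> = \<one>" using pow_mult_one'[OF g'c, of "ord g'" n] g'c pow_ord_eq_1 by metis
    finally have d2: "ord w dvd ord g'" using wc pow_eq_id by auto
    have "coprime (ord g') (p ^ k)" using co g'_def by simp
    hence "ord w = 1" using d1 d2
      by (metis coprime_common_divisor_nat coprime_commute)
    hence "w = \<one>" using wc ord_eq_1 by simp
    hence hn: "p ^ k dvd n" using hc ok w_def pow_eq_id by auto
    have "g' [^] n = \<one>" using w_eq \<open>w = \<one>\<close> g'c by simp
    hence "ord g' dvd N * m" using g'c pow_eq_id n_eq by auto
    moreover have "coprime (ord g') N" using co g'_def N_def by simp
    ultimately have om: "ord g' dvd m" by (simp add: coprime_dvd_mult_right_iff)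
    have "coprime (p ^ k) m" using coprime_mp by (simp add: coprime_commute)
    hence "p ^ k dvd N" using hn n_eq by (metis coprime_dvd_mult_left_iff)
    hence hN: "h [^] N = \<one>" using hc ok pow_eq_id by simp
    have "g' [^] c = \<one>" using om g'c pow_eq_id ut(1) by simp
    moreover obtain t' where "h [^] c = h [^] (N * t') \<otimes> h" using pow_c_split[OF hc] by blast
    moreover have "h [^] (N * t') = \<one>" using pow_mult_one[OF hc hN] .
    ultimately show ?thesis using dist[of c] hc by simp
  qed
  show ?thesis unfolding p_part_def
    by (rule the_equality) (use Q1 Q2 in blast)+
qed

definition "a = x [^] c"
definition "b = y [^] c"
definition "phi = (SOME \<phi>. \<phi> \<in> iso G G \<and> \<phi> x = y \<and> \<phi> y = x)"

lemma phi_prop: "phi \<in> iso G G" "phi x = y" "phi y = x"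
proof -
  have "\<exists>\<phi>. \<phi> \<in> iso G G \<and> \<phi> x = y \<and> \<phi> y = x" using theta by blast
  hence "phi \<in> iso G G \<and> phi x = y \<and> phi y = x" unfolding phi_def by (rule someI_ex)
  thus "phi \<in> iso G G" "phi x = y" "phi y = x" by auto
qed

lemma phi_hom: "phi \<in> hom G G" using phi_prop(1) unfolding iso_def by simp

interpretation PH: group_hom G G phi
  using phi_hom by (simp add: group_hom_def group_hom_axioms_def is_group)

lemma ac: "a \<in> carrier G" and bc: "b \<in> carrier G" using xc yc a_def b_def by auto

lemma phi_a: "phi a = b" and phi_b: "phi b = a"
  using PH.hom_nat_pow xc yc phi_prop a_def b_def by auto

lemma a_N: "a [^] N = \<one>"
proof -
  obtain u t where ut: "c = m * u" "c = N * t + 1" using c_prop by blast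
  have "a [^] N = x [^] (c * N)" using xc a_def nat_pow_pow by simp
  also have "c * N = n * u" using ut(1) n_eq by (simp add: mult.commute mult.left_commute)
  also have "x [^] (n * u) = \<one>" using pow_mult_one[OF xc] ordx xc pow_ord_eq_1 by metis
  finally show ?thesis .
qed

lemma b_N: "b [^] N = \<one>"
  using a_N phi_a PH.hom_nat_pow[OF ac, of N] by simp

lemma aP: "a \<in> P" using p_elem_in_P[OF ac] a_N N_def by simp
lemma bP: "b \<in> P" using p_elem_in_P[OF bc] b_N N_def by simp

lemma a_int_one: "a [^] (i::int) = \<one> \<longleftrightarrow> int N dvd i"
proof -
  obtain u t where ut: "c = m * u" "c = N * t + 1" using c_prop by blast
  have "a [^] i = x [^] (int c * i)" using xc a_def int_pow_pow int_pow_int by metis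
  also have "\<dots> = \<one> \<longleftrightarrow> int n dvd int c * i" using int_pow_eq_id xc ordx by simp
  also have "\<dots> \<longleftrightarrow> int N dvd int u * i"
  proof -
    have "int n = int m * int N" using n_eq by (metis of_nat_mult mult.commute)
    have "int c * i = int m * (int u * i)" using ut(1) by (metis of_nat_mult mult.assoc)
    thus ?thesis using m_pos \<open>int n = int m * int N\<close> 
      by (simp only:) (simp add: dvd_mult_cancel_left)
  qed
  also have "\<dots> \<longleftrightarrow> int N dvd i"
  proof -
    have "coprime u N"
    proof (rule coprimeI)
      fix e assume "e dvd u" "e dvd N"
      hence "e dvd N * t + 1" using ut by (metis dvd_mult)
      moreover have "e dvd N * t" using \<open>e dvd N\<close> by simp
      ultimately have "e dvd 1" using dvd_add_right_iff by blast
      thus "is_unit e" by simp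
    qed
    hence "coprime (int N) (int u)" by (simp add: coprime_commute)
    thus ?thesis by (simp add: coprime_dvd_mult_right_iff)
  qed
  finally show ?thesis .
qed

lemma b_int_one: "b [^] (i::int) = \<one> \<longleftrightarrow> int N dvd i"
  using a_int_one phi_a PH.hom_int_pow[OF ac, of i] PH.hom_one
  by (metis PH.hom_int_pow bc phi_b)

lemma genx: "generate G {x} = {x [^] (k::int) | k. True}" using generate_pow[OF xc] by simp
lemma geny: "generate G {y} = {y [^] (k::int) | k. True}" using generate_pow[OF yc] by simp

lemma a_int_in: "a [^] (i::int) \<in> generate G {x}"
  using genx xc a_def int_pow_pow int_pow_int by (metis (mono_tags, lifting) mem_Collect_eq)
lemma b_int_in: "b [^] (i::int) \<in> generate G {y}"
  using geny yc b_def int_pow_pow int_pow_int by (metis (mono_tags, lifting) mem_Collect_eq)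

definition E :: "int \<Rightarrow> int \<Rightarrow> 'a" where "E i j = a [^] i \<otimes> b [^] j"

lemma P_int_pow: "h \<in> P \<Longrightarrow> h [^] (k::int) \<in> P"
  using subgroup_int_pow_closed[OF sylP] by blast

lemma EP: "E i j \<in> P" unfolding E_def using aP bP P_int_pow subgroup.m_closed[OF sylP] by blast
lemma Ec: "E i j \<in> carrier G" using EP P_carr by blast

lemma P_comm: "h \<in> P \<Longrightarrow> k \<in> P \<Longrightarrow> h \<otimes> k = k \<otimes> h" using ab by blast

lemma E_mult: "E i j \<otimes> E k l = E (i + k) (j + l)"
proof -
  have c1: "b [^] j \<otimes> a [^] k = a [^] k \<otimes> b [^] j" using P_comm P_int_pow aP bP by blast
  have "E i j \<otimes> E k l = a [^] i \<otimes> (b [^] j \<otimes> a [^] k) \<otimes> b [^] l"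
    unfolding E_def using ac bc by (simp add: m_assoc)
  also have "\<dots> = (a [^] i \<otimes> a [^] k) \<otimes> (b [^] j \<otimes> b [^] l)"
    unfolding c1 using ac bc by (simp add: m_assoc)
  also have "\<dots> = E (i + k) (j + l)" unfolding E_def using ac bc by (simp add: int_pow_mult)
  finally show ?thesis .
qed

lemma E_pow: "E i j [^] (k::int) = E (k * i) (k * j)"
proof -
  have "a [^] i \<otimes> b [^] j = b [^] j \<otimes> a [^] i" using P_comm P_int_pow aP bP by blast
  hence "E i j [^] k = (a [^] i) [^] k \<otimes> (b [^] j) [^] k"
    unfolding E_def using ac bc by (intro int_pow_mult_distrib) auto
  thus ?thesis unfolding E_def using ac bc by (simp add: int_pow_pow mult.commute)
qed

lemma E_one_iff: "E i j = \<one> \<longleftrightarrow> int N dvd i \<and> int N dvd j"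
proof
  assume h: "E i j = \<one>"
  have "a [^] i = inv (b [^] j)" using h unfolding E_def using ac bc
    by (metis int_pow_closed inv_equality inv_inv)
  also have "\<dots> = b [^] (-j)" using bc int_pow_neg by simp
  finally have eq: "a [^] i = b [^] (-j)" .
  have "a [^] i \<in> generate G {x} \<inter> generate G {y}" using eq a_int_in[of i] b_int_in[of "-j"] by (metis IntI)
  hence "a [^] i = \<one>" using inter by blast
  moreover hence "b [^] (-j) = \<one>" using eq by simp
  ultimately show "int N dvd i \<and> int N dvd j" using a_int_one b_int_one by simp
next
  assume "int N dvd i \<and> int N dvd j"
  hence "a [^] i = \<one>" "b [^] j = \<one>" using a_int_one b_int_one by auto
  thus "E i j = \<one>" unfolding E_def by simp
qed

lemma E_00: "E 0 0 = \<one>" unfolding E_def using ac bc by simp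

lemma E_eq_iff: "E i j = E k l \<longleftrightarrow> int N dvd (i - k) \<and> int N dvd (j - l)"
proof -
  have "E i j = E k l \<longleftrightarrow> E i j \<otimes> E (-k) (-l) = \<one>"
  proof
    assume "E i j = E k l" thus "E i j \<otimes> E (-k) (-l) = \<one>" using E_mult E_00 by simp
  next
    assume h: "E i j \<otimes> E (-k) (-l) = \<one>"
    have "E i j = E i j \<otimes> E (-k) (-l) \<otimes> E k l" using E_mult Ec by (simp add: m_assoc)
    thus "E i j = E k l" using h Ec by simp
  qed
  also have "\<dots> \<longleftrightarrow> int N dvd (i - k) \<and> int N dvd (j - l)" using E_mult E_one_iff by simp
  finally show ?thesis .
qed

lemma E_a: "E 1 0 = a" and E_b: "E 0 1 = b" unfolding E_def using ac bc by auto

lemma xn: "x [^] n = \<one>" using xc ordx pow_ord_eq_1 by metis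
lemma yn: "y [^] n = \<one>" using yc ordy pow_ord_eq_1 by metis

lemma pow_mod: "g \<in> carrier G \<Longrightarrow> g [^] n = \<one> \<Longrightarrow> g [^] (k::nat) = g [^] (k mod n)"
proof -
  assume g: "g \<in> carrier G" and gn: "g [^] n = \<one>"
  have "g [^] k = g [^] (n * (k div n) + k mod n)" by simp
  also have "\<dots> = g [^] (n * (k div n)) \<otimes> g [^] (k mod n)" using g nat_pow_mult by simp
  also have "g [^] (n * (k div n)) = \<one>" using pow_mult_one[OF g gn] .
  finally show ?thesis using g by simp
qed

lemma genx_nat: "generate G {x} = {x [^] (k::nat) | k. True}"
  using generate_pow_nat[OF xc] ordx n_pos by simp
lemma geny_nat: "generate G {y} = {y [^] (k::nat) | k. True}"
  using generate_pow_nat[OF yc] ordy n_pos by simp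

definition F :: "nat \<times> nat \<Rightarrow> 'a" where "F ij = x [^] fst ij \<otimes> y [^] snd ij"

lemma F_onto: "carrier G \<subseteq> F ` ({..<n} \<times> {..<n})"
proof
  fix g assume "g \<in> carrier G"
  then obtain h k where hk: "h \<in> generate G {x}" "k \<in> generate G {y}" "g = h \<otimes> k"
    using carr unfolding set_mult_def by auto
  obtain i j where ij: "h = x [^] (i::nat)" "k = y [^] (j::nat)" using hk genx_nat geny_nat by auto
  have "g = F (i mod n, j mod n)" unfolding F_def using hk ij pow_mod[OF xc xn] pow_mod[OF yc yn] by simp
  moreover have "(i mod n, j mod n) \<in> {..<n} \<times> {..<n}" using n_pos by simp
  ultimately show "g \<in> F ` ({..<n} \<times> {..<n})" by blast
qed

lemma int_pow_xn: "x [^] (i::int) = \<one> \<longleftrightarrow> int n dvd i" using int_pow_eq_id[OF xc] ordx by simp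

lemma small_dvd_eq: "(i::nat) < n \<Longrightarrow> j < n \<Longrightarrow> int n dvd int i - int j \<Longrightarrow> i = j"
proof -
  assume h: "i < n" "j < n" "int n dvd int i - int j"
  hence "int i mod int n = int j mod int n" using mod_eq_dvd_iff by blast
  thus "i = j" using h by simp
qed

lemma F_inj: "inj_on F ({..<n} \<times> {..<n})"
proof (rule inj_onI)
  fix u v assume u: "u \<in> {..<n} \<times> {..<n}" and v: "v \<in> {..<n} \<times> {..<n}" and e: "F u = F v"
  obtain i j where ij: "u = (i, j)" by fastforce
  obtain i' j' where ij': "v = (i', j')" by fastforce
  have e2: "x [^] i \<otimes> y [^] j = x [^] i' \<otimes> y [^] j'" using e ij ij' F_def by simp
  have "inv (x [^] i') \<otimes> x [^] i = y [^] j' \<otimes> inv (y [^] j)"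
  proof -
    have "inv (x [^] i') \<otimes> (x [^] i \<otimes> y [^] j) \<otimes> inv (y [^] j) = inv (x [^] i') \<otimes> x [^] i"
      using xc yc by (simp add: m_assoc)
    moreover have "inv (x [^] i') \<otimes> (x [^] i' \<otimes> y [^] j') \<otimes> inv (y [^] j) = y [^] j' \<otimes> inv (y [^] j)"
      using xc yc by (simp add: m_assoc[symmetric])
    ultimately show ?thesis using e2 by simp
  qed
  moreover have "inv (x [^] i') \<otimes> x [^] i = x [^] (int i - int i')"
    using xc int_pow_mult[OF xc, of "- int i'" "int i"] int_pow_neg[OF xc, of "int i'"]
    by (simp add: int_pow_int)
  moreover have "y [^] j' \<otimes> inv (y [^] j) = y [^] (int j' - int j)"
    using int_pow_diff[OF yc, of "int j'" "int j"] by (simp add: int_pow_int)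
  ultimately have eq: "x [^] (int i - int i') = y [^] (int j' - int j)" by simp
  have "x [^] (int i - int i') \<in> generate G {x}" using genx by blast
  moreover have "y [^] (int j' - int j) \<in> generate G {y}" using geny by blast
  ultimately have "x [^] (int i - int i') = \<one>" "y [^] (int j' - int j) = \<one>"
    using inter eq by (metis IntI singletonD)+
  hence "int n dvd int i - int i'" "int n dvd int j' - int j"
    using int_pow_xn int_pow_eq_id[OF yc] ordy by auto
  moreover have "i < n" "i' < n" "j < n" "j' < n" using u v ij ij' by auto
  ultimately have "i = i'" "j = j'" using small_dvd_eq by auto
  thus "u = v" using ij ij' by simp
qed

lemma order_nn: "order G = n * n"
proof -
  have "F ` ({..<n} \<times> {..<n}) \<subseteq> carrier G" unfolding F_def using xc yc by auto
  hence "carrier G = F ` ({..<n} \<times> {..<n})" using F_onto by blast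
  hence "order G = card ({..<n} \<times> {..<n})" unfolding order_def using card_image[OF F_inj] by simp
  thus ?thesis by (simp add: card_cartesian_product)
qed

lemma card_P: "card P = N * N"
proof -
  have "multiplicity p (n * n) = d + d" unfolding d_def
    using prime_elem_multiplicity_mult_distrib[of p n n] pr n_pos by simp
  thus ?thesis using cardP order_nn N_def by (simp add: power_add)
qed

lemma P_rep: "h \<in> P \<Longrightarrow> \<exists>i j. h = E i j"
proof -
  assume hP: "h \<in> P"
  let ?S = "{0..<int N} \<times> {0..<int N}"
  have inj: "inj_on (\<lambda>(i, j). E i j) ?S"
  proof (rule inj_onI, clarsimp)
    fix i j k l assume "0 \<le> i" "i < int N" "0 \<le> j" "j < int N" "0 \<le> k" "k < int N"
      "0 \<le> l" "l < int N" "E i j = E k l"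
    thus "i = k \<and> j = l" using E_eq_iff
      by (metis mod_eq_dvd_iff mod_pos_pos_trivial)
  qed
  have sub: "(\<lambda>(i, j). E i j) ` ?S \<subseteq> P" using EP by auto
  have "card ((\<lambda>(i, j). E i j) ` ?S) = N * N" using card_image[OF inj] by (simp add: card_cartesian_product)
  moreover have "finite P" using fin sylP subgroup.subset finite_subset by metis
  ultimately have "(\<lambda>(i, j). E i j) ` ?S = P" using card_subset_eq[OF _ sub] card_P by simp
  thus ?thesis using hP by auto
qed

definition cj :: "'a \<Rightarrow> 'a \<Rightarrow> 'a" where "cj g h = inv g \<otimes> h \<otimes> g"

lemma canc1: "g \<in> carrier G \<Longrightarrow> z \<in> carrier G \<Longrightarrow> g \<otimes> (inv g \<otimes> z) = z"
  by (simp add: m_assoc[symmetric])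
lemma canc2: "g \<in> carrier G \<Longrightarrow> z \<in> carrier G \<Longrightarrow> inv g \<otimes> (g \<otimes> z) = z"
  by (simp add: m_assoc[symmetric])

lemma cj_hom: "g \<in> carrier G \<Longrightarrow> cj g \<in> hom G G"
  unfolding cj_def by (rule homI) (auto simp: m_assoc canc1)

lemma cj_E: "g \<in> carrier G \<Longrightarrow> cj g (E i j) = (cj g a) [^] i \<otimes> (cj g b) [^] j"
  unfolding E_def using hom_mult[OF cj_hom] hom_int_pow[OF cj_hom _ is_group is_group] ac bc
  by simp

lemma cj_comp: "g \<in> carrier G \<Longrightarrow> k \<in> carrier G \<Longrightarrow> h \<in> carrier G \<Longrightarrow> cj (g \<otimes> k) h = cj k (cj g h)"
  unfolding cj_def by (simp add: inv_mult_group m_assoc)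

lemma cj_pow_Suc: "g \<in> carrier G \<Longrightarrow> h \<in> carrier G \<Longrightarrow> cj (g [^] Suc k) h = cj g (cj (g [^] k) h)"
  using cj_comp[of "g [^] k" g h] by simp

lemma cj_P: "g \<in> carrier G \<Longrightarrow> h \<in> P \<Longrightarrow> cj g h \<in> P"
  unfolding cj_def using nrm normal_inv_iff[of P] inv_closed[of g] inv_inv[of g] by metis

lemma cj_triv: "g \<in> P \<Longrightarrow> h \<in> P \<Longrightarrow> cj g h = h"
  unfolding cj_def using P_comm[of h g] P_carr by (simp add: m_assoc canc2)

lemma cj_comm: "g \<in> carrier G \<Longrightarrow> h \<in> carrier G \<Longrightarrow> h \<otimes> g = g \<otimes> h \<Longrightarrow> cj g h = h"
  unfolding cj_def by (simp add: m_assoc canc2)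

lemma phi_cj: "g \<in> carrier G \<Longrightarrow> h \<in> carrier G \<Longrightarrow> phi (cj g h) = cj (phi g) (phi h)"
  unfolding cj_def by simp

lemma phi_E: "phi (E i j) = E j i"
proof -
  have "phi (E i j) = b [^] i \<otimes> a [^] j" unfolding E_def
    using PH.hom_int_pow ac bc phi_a phi_b by simp
  also have "\<dots> = a [^] j \<otimes> b [^] i" using P_comm P_int_pow aP bP by blast
  finally show ?thesis unfolding E_def .
qed

lemma cj_lin:
  assumes g: "g \<in> carrier G" and ga: "cj g a = E A B" and gb: "cj g b = E C D"
  shows "cj g (E i j) = E (i * A + j * C) (i * B + j * D)"
  using cj_E[OF g] ga gb by (simp add: E_pow E_mult)

definition "rs = (SOME rs. cj x b = E (fst rs) (snd rs))"
definition "r = fst rs"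
definition "s = snd rs"

lemma cxb: "cj x b = E r s"
proof -
  have "cj x b \<in> P" using cj_P[OF xc bP] .
  then obtain i j where "cj x b = E i j" using P_rep by blast
  hence "\<exists>rs. cj x b = E (fst rs) (snd rs)" by (metis fst_conv snd_conv)
  hence "cj x b = E (fst rs) (snd rs)" unfolding rs_def by (rule someI_ex)
  thus ?thesis unfolding r_def s_def .
qed

lemma xpow_a: "cj (x [^] (k::nat)) a = a"
  by (rule cj_comm) (use xc ac a_def nat_pow_comm in auto)
lemma ypow_b: "cj (y [^] (k::nat)) b = b"
  by (rule cj_comm) (use yc bc b_def nat_pow_comm in auto)

lemma cxa: "cj x a = a" using xpow_a[of 1] xc by simp
lemma cyb: "cj y b = b" using ypow_b[of 1] yc by simp

lemma cya: "cj y a = E s r"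
  using phi_cj[OF xc bc] cxb phi_prop phi_b phi_E by simp

lemma lin_x: "cj x (E i j) = E (i + j * r) (j * s)"
  using cj_lin[OF xc, of 1 0 r s] cxa cxb E_a by simp
lemma lin_y: "cj y (E i j) = E (i * s) (i * r + j)"
  using cj_lin[OF yc, of s r 0 1] cya cyb E_b by simp

definition cs :: "nat \<Rightarrow> int" where "cs k = (\<Sum>t<k. s ^ t)"

lemma cs_Suc: "cs (Suc k) = cs k + s ^ k" unfolding cs_def by simp
lemma cs_id: "(s - 1) * cs k = s ^ k - 1"
  by (induction k) (auto simp: cs_Suc algebra_simps cs_def)

lemma iter_x: "cj (x [^] k) b = E (r * cs k) (s ^ k)"
proof (induction k)
  case 0 show ?case using cj_def bc E_b by (simp add: cs_def)
next
  case (Suc k) thus ?case using cj_pow_Suc[OF xc bc] lin_x cs_Suc by (simp add: algebra_simps)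
qed

lemma iter_y: "cj (y [^] k) a = E (s ^ k) (r * cs k)"
proof (induction k)
  case 0 show ?case using cj_def ac E_a by (simp add: cs_def)
next
  case (Suc k) thus ?case using cj_pow_Suc[OF yc ac] lin_y cs_Suc by (simp add: algebra_simps)
qed

lemma E_0s: "E 0 j = b [^] j" unfolding E_def using ac bc by simp
lemma E_w0: "E w 0 = a [^] w" unfolding E_def using ac bc by simp

lemma facts_A: "int N dvd r * cs q" "int N dvd s ^ q - 1"
proof -
  have "cj (x [^] q) b = b" using cj_triv[OF pow_q_in_P[OF xc] bP] .
  hence "E (r * cs q) (s ^ q) = E 0 1" using iter_x E_b by simp
  thus "int N dvd r * cs q" "int N dvd s ^ q - 1" using E_eq_iff by auto
qed

lemma fact_n: "int N dvd s ^ n - 1"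
proof -
  have "cj (x [^] n) b = b" using xn bc cj_def by simp
  hence "E (r * cs n) (s ^ n) = E 0 1" using iter_x E_b by simp
  thus ?thesis using E_eq_iff by auto
qed

lemma facts_B: "\<exists>j. int N dvd s + r * r - s ^ j \<and> int N dvd s * r - r * cs j"
proof -
  have "y \<otimes> x \<in> carrier G" using xc yc by simp
  then obtain i j where ij: "y \<otimes> x = x [^] (i::nat) \<otimes> y [^] (j::nat)"
    using F_onto unfolding F_def by auto
  have "cj (y \<otimes> x) a = cj x (cj y a)" using cj_comp xc yc ac by simp
  also have "\<dots> = E (s + r * r) (r * s)" using cya lin_x by simp
  finally have e1: "cj (y \<otimes> x) a = E (s + r * r) (r * s)" .
  have "cj (x [^] i \<otimes> y [^] j) a = cj (y [^] j) (cj (x [^] i) a)" using cj_comp xc yc ac by simp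
  also have "\<dots> = E (s ^ j) (r * cs j)" using xpow_a iter_y by simp
  finally have "E (s + r * r) (r * s) = E (s ^ j) (r * cs j)" using e1 ij by simp
  hence "int N dvd s + r * r - s ^ j \<and> int N dvd r * s - r * cs j" using E_eq_iff by simp
  thus ?thesis by (auto simp: mult.commute)
qed

lemma ns: "d \<ge> 1 \<Longrightarrow> \<not> int p dvd s"
proof
  assume d1: "d \<ge> 1" and h: "int p dvd s"
  have "int p dvd int N" unfolding N_def using d1 by (simp add: dvd_power)
  hence "int p dvd s ^ q - 1" using facts_A(2) dvd_trans by blast
  moreover have "int p dvd s ^ q" using h q_pos by (meson dvd_power dvd_trans)
  ultimately have "int p dvd s ^ q - (s ^ q - 1)" using dvd_diff by blast
  hence "int p dvd 1" by simp
  thus False using pr by simp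
qed

lemma xpow_fix: "cj (x [^] (k::nat)) (E w 0) = E w 0"
  using cj_E[of "x [^] k" w 0] xc xpow_a E_w0 bc ac by simp

lemma case2b:
  assumes d1: "d \<ge> 1" and ns1: "\<not> int p dvd s - 1" and e: "e = 1 \<or> e = -1"
    and dr: "int N dvd r - e * (s - 1)"
  shows False
proof -
  have ee: "e * e = 1" using e by auto
  have cxf: "cj x (E z (e * z)) = E (s * z) (e * (s * z))" for z
  proof -
    have "cj x (E z (e * z)) = E (z + e * z * r) (e * z * s)" using lin_x by simp
    moreover have "int N dvd (z + e * z * r) - s * z"
    proof -
      have "z * e * (r - e * (s - 1)) = z * e * r - z * (e * e) * (s - 1)" by (simp add: algebra_simps)
      also have "\<dots> = z * e * r - z * (s - 1)" using ee by simp
      also have "\<dots> = (z + e * z * r) - s * z" by (simp add: algebra_simps)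
      finally have "(z + e * z * r) - s * z = z * e * (r - e * (s - 1))" by simp
      thus ?thesis using dr by simp
    qed
    moreover have "E (z + e * z * r) (e * z * s) = E (s * z) (e * (s * z))"
      using E_eq_iff \<open>int N dvd (z + e * z * r) - s * z\<close> by (simp add: mult.commute mult.left_commute)
    ultimately show ?thesis by simp
  qed
  have cxkf: "cj (x [^] k) (E z (e * z)) = E (s ^ k * z) (e * (s ^ k * z))" for k z
  proof (induction k arbitrary: z)
    case 0 show ?case using cj_def Ec by simp
  next
    case (Suc k)
    have "cj (x [^] Suc k) (E z (e * z)) = cj x (E (s ^ k * z) (e * (s ^ k * z)))"
      using cj_pow_Suc[OF xc Ec] Suc by simp
    also have "\<dots> = E (s ^ Suc k * z) (e * (s ^ Suc k * z))" using cxf by (simp add: mult.assoc)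
    finally show ?case .
  qed
  define g where "g = y \<otimes> x [^] (n - 1)"
  have gc: "g \<in> carrier G" using g_def xc yc by simp
  have cjg: "cj g h = cj (x [^] (n - 1)) (cj y h)" if "h \<in> carrier G" for h
    using cj_comp that xc yc g_def by simp
  have "cj y (E 1 e) = E s (r + e)" using lin_y by simp
  also have "\<dots> = E s (e * s)" using E_eq_iff dr by (simp add: algebra_simps)
  finally have "cj g (E 1 e) = cj (x [^] (n - 1)) (E (s * 1) (e * (s * 1)))" using cjg Ec by simp
  also have "\<dots> = E (s ^ (n - 1) * s) (e * (s ^ (n - 1) * s))" using cxkf by simp
  also have "s ^ (n - 1) * s = s ^ n" using n_pos by (simp add: power_Suc2[symmetric])
  also have "E (s ^ n) (e * s ^ n) = E 1 e"
  proof -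
    have "int N dvd e * (s ^ n - 1)" using fact_n by simp
    thus ?thesis using E_eq_iff fact_n by (simp add: right_diff_distrib)
  qed
  finally have gf: "cj g (E 1 e) = E 1 e" .
  define tau where "tau = s ^ (n - 1) * (s - 1)"
  have "cj y a = E 1 0 \<otimes> E (s - 1) (e * (s - 1))" using cya E_mult E_eq_iff dr by simp
  hence "cj g a = cj (x [^] (n - 1)) (E 1 0 \<otimes> E (s - 1) (e * (s - 1)))" using cjg ac by simp
  also have "\<dots> = E 1 0 \<otimes> E (tau) (e * tau)"
    using hom_mult[OF cj_hom, of "x [^] (n - 1)"] xc Ec xpow_fix cxkf tau_def by simp
  finally have ga: "cj g a = E 1 0 \<otimes> E tau (e * tau)" .
  have gpow: "cj g (E z (e * z)) = E z (e * z)" for z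
  proof -
    have "E z (e * z) = E 1 e [^] z" using E_pow by (simp add: mult.commute)
    hence "cj g (E z (e * z)) = cj g (E 1 e) [^] z" using hom_int_pow[OF cj_hom[OF gc] Ec is_group is_group] by simp
    thus ?thesis using gf E_pow by (simp add: mult.commute)
  qed
  have iter: "cj (g [^] k) a = E (1 + int k * tau) (e * (int k * tau))" for k
  proof (induction k)
    case 0 show ?case using cj_def ac E_a by simp
  next
    case (Suc k)
    have "cj (g [^] Suc k) a = cj g (E 1 0 \<otimes> E (int k * tau) (e * (int k * tau)))"
      using cj_pow_Suc[OF gc ac] Suc E_mult by simp
    also have "\<dots> = cj g a \<otimes> E (int k * tau) (e * (int k * tau))"
      using hom_mult[OF cj_hom[OF gc] ac Ec] gpow E_a by simp
    also have "\<dots> = E (1 + tau + int k * tau) (0 + e * tau + e * (int k * tau))"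
      unfolding ga E_mult by simp
    also have "1 + tau + int k * tau = 1 + int (Suc k) * tau" by (simp add: algebra_simps)
    also have "0 + e * tau + e * (int k * tau) = e * (int (Suc k) * tau)" by (simp add: algebra_simps)
    finally show ?case .
  qed
  have "cj (g [^] q) a = a" using cj_triv[OF pow_q_in_P[OF gc] aP] .
  hence "E (1 + int q * tau) (e * (int q * tau)) = E 1 0" using iter E_a by simp
  hence h1: "int N dvd int q * tau" using E_eq_iff by simp
  have h2: "int p dvd int N" unfolding N_def using d1 by (simp add: dvd_power)
  have pd: "int p dvd int q * (s ^ (n - 1) * (s - 1))" using dvd_trans[OF h2 h1] unfolding tau_def .
  have nq: "\<not> int p dvd int q"
  proof
    assume "int p dvd int q"
    hence "p dvd q" by simp
    hence "p = 1" using coprime_common_divisor_nat[OF q_coprime, of p] by simp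
    thus False using prime_gt_1_nat[OF pr] by simp
  qed
  have ip: "Factorial_Ring.prime (int p)" using pr by simp
  have nsn: "\<not> int p dvd s ^ (n - 1)"
  proof
    assume "int p dvd s ^ (n - 1)"
    hence "int p dvd s" by (rule prime_dvd_power[OF ip])
    thus False using ns[OF d1] by simp
  qed
  have "int p dvd int q \<or> int p dvd s ^ (n - 1) \<or> int p dvd s - 1"
    using pd prime_dvd_mult_iff[OF ip] by metis
  thus False using nq nsn ns1 by blast
qed

lemma nq: "\<not> int p dvd int q"
proof
  assume "int p dvd int q"
  hence "p dvd q" by simp
  hence "p = 1" using coprime_common_divisor_nat[OF q_coprime, of p] by simp
  thus False using prime_gt_1_nat[OF pr] by simp
qed

lemma main_l: "\<exists>l::nat. coprime l p \<and> cj x b = b [^] l"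
proof (cases "d = 0")
  case True
  hence "N = 1" unfolding N_def by simp
  hence "b = \<one>" using b_N bc by simp
  hence "cj x b = b [^] (1::nat)" using cj_def xc by simp
  thus ?thesis by (intro exI[of _ 1]) simp
next
  case False
  hence d1: "d \<ge> 1" by simp
  obtain j where B: "int N dvd s + r * r - s ^ j" "int N dvd s * r - r * cs j" using facts_B by blast
  have iN: "int N = int p ^ d" unfolding N_def by simp
  have ip: "Factorial_Ring.prime (int p)" using pr by simp
  have "int p ^ d dvd r \<or> (\<not> int p dvd s - 1 \<and> (\<exists>e. (e = 1 \<or> e = -1) \<and> int p ^ d dvd r - e * (s - 1)))"
    by (rule nt_main[OF ip d1 nq]) (use facts_A B ns[OF d1] iN in \<open>auto simp: cs_def\<close>)
  hence Nr: "int N dvd r" using case2b[OF d1] iN by auto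
  have "cj x b = E r s" using cxb .
  also have "\<dots> = E 0 (s mod int N)" using E_eq_iff Nr by (simp add: mod_eq_dvd_iff[symmetric])
  also have "\<dots> = b [^] (s mod int N)" using E_0s by simp
  also have "\<dots> = b [^] nat (s mod int N)" using N_pos by (simp add: pow_nat)
  finally have e1: "cj x b = b [^] nat (s mod int N)" .
  have "\<not> p dvd nat (s mod int N)"
  proof
    assume "p dvd nat (s mod int N)"
    hence h: "int p dvd s mod int N" using N_pos by (metis int_dvd_int_iff nat_0_le of_nat_0_less_iff pos_mod_sign)
    have h2: "int p dvd int N" unfolding N_def using d1 by (simp add: dvd_power)
    have "s = s mod int N + int N * (s div int N)" by simp
    hence "int p dvd s" using h h2 by (metis dvd_add dvd_mult2)
    thus False using ns[OF d1] by simp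
  qed
  hence "coprime (nat (s mod int N)) p" using pr by (simp add: coprime_commute prime_imp_coprime)
  thus ?thesis using e1 by blast
qed

lemma final:
  "\<exists>l::nat. coprime l p \<and>
           inv x \<otimes> p_part G p x \<otimes> x = p_part G p x \<and>
           inv x \<otimes> p_part G p y \<otimes> x = p_part G p y [^] (l::nat) \<and>
           inv y \<otimes> p_part G p x \<otimes> y = p_part G p x [^] (l::nat) \<and>
           inv y \<otimes> p_part G p y \<otimes> y = p_part G p y"
proof -
  have px: "p_part G p x = a" using p_part_eq[OF xc ordx] a_def by simp
  have py: "p_part G p y = b" using p_part_eq[OF yc ordy] b_def by simp
  obtain l :: nat where l: "coprime l p" "cj x b = b [^] l" using main_l by blast
  have "cj y a = phi (cj x b)" using phi_cj[OF xc bc] phi_prop phi_b by simp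
  also have "\<dots> = a [^] l" using l(2) PH.hom_nat_pow[OF bc] phi_b by simp
  finally have "cj y a = a [^] l" .
  thus ?thesis unfolding px py using l cxa cyb unfolding cj_def by blast
qed

end

theorem proposition7p2:
  fixes G (structure) and n p :: nat and x y :: 'a and P :: "'a set"
  assumes "isobicyclic G n x y"
    and "Factorial_Ring.prime p"
    and "sylow_subgroup G p P"
    and "P \<lhd> G"
    and "\<forall>a\<in>P. \<forall>b\<in>P. a \<otimes> b = b \<otimes> a"
  shows "\<exists>l::nat. coprime l p \<and>
           inv x \<otimes> p_part G p x \<otimes> x = p_part G p x \<and>
           inv x \<otimes> p_part G p y \<otimes> x = p_part G p y [^] (l::nat) \<and>
           inv y \<otimes> p_part G p x \<otimes> y = p_part G p x [^] (l::nat) \<and>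
           inv y \<otimes> p_part G p y \<otimes> y = p_part G p y"
proof -
  have "iso_setting G n p x y P"
    using assms unfolding isobicyclic_def sylow_subgroup_def iso_setting_def iso_setting_axioms_def
    by auto
  then interpret iso_setting G n p x y P .
  show ?thesis by (rule final)
qed

end
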